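(* Let $\lambda$ be a partition of $r$ and let $M$ be a $\mathbf{Z}S_r$-module that is free as a $\mathbf{Z}$-module. If $f:S^\lambda\to M$ is a non-zero homomorphism of $\mathbf{Z}S_r$-modules, then $f$ is injective.
   Context: $S^\lambda$ denotes the integral Specht module for $\mathbf{Z}S_r$ (the $\mathbf{Z}$-span of the $\lambda$-polytabloids in the Young permutation module $M^\lambda$). *)

theory Defs
  imports "HOL-Combinatorics.Permutations"
begin

definition is_partition :: "nat list \<Rightarrow> nat \<Rightarrow> bool" where
  "is_partition la r \<longleftrightarrow> sorted (rev la) \<and> (\<forall>x\<in>set la. 0 < x) \<and> sum_list la = r"

definition young_diagram :: "nat list \<Rightarrow> (nat \<times> nat) set" where
  "young_diagram la = {(i, j). i < length la \<and> j < la ! i}"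

text \<open>lambda-tableaux with entries 0..r-1 (symmetric group acts on {0..<r}).\<close>
definition tableaux :: "nat list \<Rightarrow> nat \<Rightarrow> ((nat \<times> nat) \<Rightarrow> nat) set" where
  "tableaux la r = {T. bij_betw T (young_diagram la) {0..<r}}"

text \<open>lambda-tabloids, represented as maps from {0..<r} to row indices
  (row j containing exactly la!j entries), extended by 0 outside {0..<r}.\<close>
definition tabloids :: "nat list \<Rightarrow> nat \<Rightarrow> (nat \<Rightarrow> nat) set" where
  "tabloids la r = {t. (\<forall>k. r \<le> k \<longrightarrow> t k = 0) \<and> (\<forall>k<r. t k < length la)
      \<and> (\<forall>j<length la. card {k. k < r \<and> t k = j} = la ! j)}"

definition tabloid_of :: "nat list \<Rightarrow> nat \<Rightarrow> ((nat \<times> nat) \<Rightarrow> nat) \<Rightarrow> (nat \<Rightarrow> nat)" where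
  "tabloid_of la r T = (\<lambda>k. if k < r then fst (inv_into (young_diagram la) T k) else 0)"

definition column_group :: "nat list \<Rightarrow> nat \<Rightarrow> ((nat \<times> nat) \<Rightarrow> nat) \<Rightarrow> (nat \<Rightarrow> nat) set" where
  "column_group la r T = {\<sigma>. \<sigma> permutes {0..<r} \<and>
      (\<forall>i j. (i, j) \<in> young_diagram la \<longrightarrow>
         (\<exists>i'. (i', j) \<in> young_diagram la \<and> \<sigma> (T (i, j)) = T (i', j)))}"

text \<open>Elements of the Young permutation module M^lambda are Z-valued functions on tabloids
  (coefficients w.r.t. the tabloid basis). The polytabloid
  e_T = sum over sigma in C_T of sign(sigma) {sigma T}.\<close>
definition polytabloid :: "nat list \<Rightarrow> nat \<Rightarrow> ((nat \<times> nat) \<Rightarrow> nat) \<Rightarrow> ((nat \<Rightarrow> nat) \<Rightarrow> int)" where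
  "polytabloid la r T = (\<lambda>s. \<Sum>\<sigma>\<in>column_group la r T.
       (if tabloid_of la r (\<sigma> \<circ> T) = s then sign \<sigma> else 0))"

definition specht :: "nat list \<Rightarrow> nat \<Rightarrow> ((nat \<Rightarrow> nat) \<Rightarrow> int) set" where
  "specht la r = {v. \<exists>F c. finite F \<and> F \<subseteq> tableaux la r \<and>
      v = (\<lambda>s. \<Sum>T\<in>F. c T * polytabloid la r T s)}"

text \<open>Action of a permutation sigma of {0..<r} on M^lambda, sigma.{t} = {sigma t}.\<close>
definition perm_vec :: "(nat \<Rightarrow> nat) \<Rightarrow> ((nat \<Rightarrow> nat) \<Rightarrow> int) \<Rightarrow> ((nat \<Rightarrow> nat) \<Rightarrow> int)" where
  "perm_vec \<sigma> v = (\<lambda>s. v (s \<circ> \<sigma>))"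

definition zscale :: "int \<Rightarrow> 'a::ab_group_add \<Rightarrow> 'a" where
  "zscale k x = (if 0 \<le> k then (\<Sum>i<nat k. x) else - (\<Sum>i<nat (- k). x))"

definition ZS_module :: "nat \<Rightarrow> ((nat \<Rightarrow> nat) \<Rightarrow> 'm::ab_group_add \<Rightarrow> 'm) \<Rightarrow> bool" where
  "ZS_module r act \<longleftrightarrow>
     (\<forall>\<sigma> x y. \<sigma> permutes {0..<r} \<longrightarrow> act \<sigma> (x + y) = act \<sigma> x + act \<sigma> y) \<and>
     (\<forall>x. act id x = x) \<and>
     (\<forall>\<sigma> \<tau> x. \<sigma> permutes {0..<r} \<longrightarrow> \<tau> permutes {0..<r} \<longrightarrow>
         act (\<sigma> \<circ> \<tau>) x = act \<sigma> (act \<tau> x))"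

definition free_Z_module :: "'m::ab_group_add itself \<Rightarrow> bool" where
  "free_Z_module _ \<longleftrightarrow> (\<exists>B::'m set. \<forall>m::'m. \<exists>!c::'m \<Rightarrow> int.
      (\<forall>b. b \<notin> B \<longrightarrow> c b = 0) \<and> finite {b. c b \<noteq> 0} \<and>
      m = (\<Sum>b\<in>{b. c b \<noteq> 0}. zscale (c b) b))"

definition specht_hom :: "nat list \<Rightarrow> nat \<Rightarrow> ((nat \<Rightarrow> nat) \<Rightarrow> 'm::ab_group_add \<Rightarrow> 'm)
    \<Rightarrow> (((nat \<Rightarrow> nat) \<Rightarrow> int) \<Rightarrow> 'm) \<Rightarrow> bool" where
  "specht_hom la r act f \<longleftrightarrow>
     (\<forall>x\<in>specht la r. \<forall>y\<in>specht la r. f (\<lambda>s. x s + y s) = f x + f y) \<and>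
     (\<forall>\<sigma> x. \<sigma> permutes {0..<r} \<longrightarrow> x \<in> specht la r \<longrightarrow> f (perm_vec \<sigma> x) = act \<sigma> (f x))"

end

theory Submission
  imports Defs
begin


definition pos :: "nat list \<Rightarrow> ((nat \<times> nat) \<Rightarrow> nat) \<Rightarrow> nat \<Rightarrow> nat \<times> nat" where
  "pos la T k = inv_into (young_diagram la) T k"

lemma tab_bij: "T \<in> tableaux la r \<Longrightarrow> bij_betw T (young_diagram la) {0..<r}"
  by (simp add: tableaux_def)

lemma finite_D: "finite (young_diagram la)"
proof -
  have "young_diagram la \<subseteq> {..<length la} \<times> {..<Suc (Max (insert 0 (set la)))}"
  proof
    fix p assume "p \<in> young_diagram la"
    then obtain i j where p: "p = (i,j)" "i < length la" "j < la ! i" unfolding young_diagram_def by auto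
    have "la ! i \<in> insert 0 (set la)" using p(2) by simp
    then have "la ! i \<le> Max (insert 0 (set la))" by (intro Max_ge) simp_all
    then have "j < Suc (Max (insert 0 (set la)))" using p(3) by linarith
    then show "p \<in> {..<length la} \<times> {..<Suc (Max (insert 0 (set la)))}" using p by simp
  qed
  then show ?thesis by (rule finite_subset) simp
qed

lemma pos_in: "bij_betw T (young_diagram la) {0..<r} \<Longrightarrow> k < r \<Longrightarrow> pos la T k \<in> young_diagram la"
  unfolding pos_def bij_betw_def by (intro inv_into_into) auto

lemma T_pos: "bij_betw T (young_diagram la) {0..<r} \<Longrightarrow> k < r \<Longrightarrow> T (pos la T k) = k"
  unfolding pos_def bij_betw_def by (intro f_inv_into_f) auto

lemma pos_T: "bij_betw T (young_diagram la) {0..<r} \<Longrightarrow> p \<in> young_diagram la \<Longrightarrow> pos la T (T p) = p"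
  unfolding pos_def by (meson bij_betw_def inv_into_f_f)

lemma T_lt: "bij_betw T (young_diagram la) {0..<r} \<Longrightarrow> p \<in> young_diagram la \<Longrightarrow> T p < r"
  by (auto simp: bij_betw_def)

lemma pos_inj: "bij_betw T (young_diagram la) {0..<r} \<Longrightarrow> a < r \<Longrightarrow> b < r \<Longrightarrow> pos la T a = pos la T b \<Longrightarrow> a = b"
  using T_pos by metis

lemma perm_lt: "\<sigma> permutes {0..<(r::nat)} \<Longrightarrow> \<sigma> k < r \<longleftrightarrow> k < r"
  using permutes_in_image[of \<sigma> "{0..<r}" k] by simp

lemma perm_out: "\<sigma> permutes {0..<(r::nat)} \<Longrightarrow> \<not> k < r \<Longrightarrow> \<sigma> k = k"
  by (simp add: permutes_def)

lemma tabloid_of_comp: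
  assumes b: "bij_betw T (young_diagram la) {0..<r}" and p: "\<pi> permutes {0..<r}"
  shows "tabloid_of la r (\<pi> \<circ> T) k = (if k < r then fst (pos la T (inv \<pi> k)) else 0)"
proof (cases "k < r")
  case True
  have ik: "inv \<pi> k < r" using True p by (metis perm_lt permutes_inv)
  have inj: "inj_on (\<pi> \<circ> T) (young_diagram la)"
    using b p by (meson bij_betw_def comp_inj_on inj_on_subset permutes_inj subset_UNIV)
  have "inv_into (young_diagram la) (\<pi> \<circ> T) k = pos la T (inv \<pi> k)"
    apply (rule inv_into_f_eq[OF inj pos_in[OF b ik]])
    using T_pos[OF b ik] p by (simp add: permutes_inverses(1))
  then show ?thesis using True by (simp add: tabloid_of_def)
qed (simp add: tabloid_of_def)

lemma tabloid_of_id: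
  assumes b: "bij_betw T (young_diagram la) {0..<r}"
  shows "tabloid_of la r T k = (if k < r then fst (pos la T k) else 0)"
  by (simp add: tabloid_of_def pos_def)

lemma column_group_alt:
  assumes b: "bij_betw T (young_diagram la) {0..<r}"
  shows "column_group la r T = {\<sigma>. \<sigma> permutes {0..<r} \<and> (\<forall>k<r. snd (pos la T (\<sigma> k)) = snd (pos la T k))}"
proof safe
  fix \<sigma> assume "\<sigma> \<in> column_group la r T"
  then show "\<sigma> permutes {0..<r}" by (simp add: column_group_def)
next
  fix \<sigma> k assume s: "\<sigma> \<in> column_group la r T" and k: "k < r"
  obtain i j where ij: "pos la T k = (i,j)" by fastforce
  have "(i,j) \<in> young_diagram la" using pos_in[OF b k] ij by simp
  then obtain i' where "(i',j) \<in> young_diagram la" "\<sigma> (T (i,j)) = T (i',j)"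
    using s unfolding column_group_def by blast
  then show "snd (pos la T (\<sigma> k)) = snd (pos la T k)"
    using ij T_pos[OF b k] pos_T[OF b] by simp
next
  fix \<sigma> assume p: "\<sigma> permutes {0..<r}" and c: "\<forall>k<r. snd (pos la T (\<sigma> k)) = snd (pos la T k)"
  show "\<sigma> \<in> column_group la r T" unfolding column_group_def
  proof (intro CollectI conjI p allI impI)
    fix i j assume ij: "(i,j) \<in> young_diagram la"
    define k where "k = T (i,j)"
    have k: "k < r" using T_lt[OF b ij] k_def by simp
    have sk: "\<sigma> k < r" using k p perm_lt by blast
    obtain i' j' where q: "pos la T (\<sigma> k) = (i',j')" by fastforce
    have "j' = j" using c k q pos_T[OF b ij] k_def by (metis snd_conv)
    then show "\<exists>i'. (i', j) \<in> young_diagram la \<and> \<sigma> (T (i, j)) = T (i', j)"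
      using pos_in[OF b sk] T_pos[OF b sk] q k_def by (intro exI[of _ i']) auto
  qed
qed




lemma bij_comp_perm:
  assumes b: "bij_betw U (young_diagram la) {0..<r}" and p: "\<sigma> permutes {0..<r}"
  shows "bij_betw (\<sigma> \<circ> U) (young_diagram la) {0..<r}"
  using bij_betw_trans[OF b permutes_imp_bij[OF p]] .

lemma tab_comp:
  assumes b: "bij_betw U (young_diagram la) {0..<r}" and p: "\<sigma> permutes {0..<r}"
  shows "tabloid_of la r (\<sigma> \<circ> U) = tabloid_of la r U \<circ> inv \<sigma>"
proof
  fix k
  have pi: "inv \<sigma> permutes {0..<r}" using p by (rule permutes_inv)
  show "tabloid_of la r (\<sigma> \<circ> U) k = (tabloid_of la r U \<circ> inv \<sigma>) k"
    using tabloid_of_comp[OF b p, of k] tabloid_of_id[OF b, of "inv \<sigma> k"] perm_lt[OF pi, of k]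
    by simp
qed

locale tabx =
  fixes la :: "nat list" and r :: nat and T :: "nat \<times> nat \<Rightarrow> nat"
  assumes b: "bij_betw T (young_diagram la) {0..<r}"
begin

abbreviation "C \<equiv> column_group la r T"
abbreviation "col k \<equiv> snd (pos la T k)"
abbreviation "row k \<equiv> fst (pos la T k)"

lemma C_iff: "\<pi> \<in> C \<longleftrightarrow> \<pi> permutes {0..<r} \<and> (\<forall>k<r. col (\<pi> k) = col k)"
  using column_group_alt[OF b] by auto

lemma C_perm: "\<pi> \<in> C \<Longrightarrow> \<pi> permutes {0..<r}"
  using C_iff by blast

lemma C_permutation: "\<pi> \<in> C \<Longrightarrow> permutation \<pi>"
  using C_perm permutation_permutes by blast

lemma C_col: "\<pi> \<in> C \<Longrightarrow> k < r \<Longrightarrow> col (\<pi> k) = col k"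
  using C_iff by blast

lemma C_id: "id \<in> C"
  using C_iff permutes_id by auto

lemma C_comp: "\<pi> \<in> C \<Longrightarrow> \<rho> \<in> C \<Longrightarrow> \<pi> \<circ> \<rho> \<in> C"
  unfolding C_iff using permutes_compose perm_lt by fastforce

lemma C_inv: "\<pi> \<in> C \<Longrightarrow> inv \<pi> \<in> C"
proof -
  assume a: "\<pi> \<in> C"
  have p: "\<pi> permutes {0..<r}" using a C_perm by blast
  have "col (inv \<pi> k) = col k" if k: "k < r" for k
  proof -
    have "inv \<pi> k < r" using k perm_lt[OF permutes_inv[OF p]] by blast
    then have "col (\<pi> (inv \<pi> k)) = col (inv \<pi> k)" using C_col[OF a] by blast
    then show ?thesis using permutes_inverses(1)[OF p] by simp
  qed
  then show ?thesis unfolding C_iff using permutes_inv[OF p] by blast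
qed

lemma finite_C: "finite C"
  by (rule finite_subset[OF _ finite_permutations[of "{0..<r}"]]) (auto dest: C_perm)

lemma bij_left: "\<tau> \<in> C \<Longrightarrow> bij_betw (\<lambda>\<pi>. \<tau> \<circ> \<pi>) C C"
proof -
  assume t: "\<tau> \<in> C"
  have p: "\<tau> permutes {0..<r}" using t C_perm by blast
  show ?thesis
    apply (rule bij_betw_byWitness[where f'="\<lambda>\<pi>. inv \<tau> \<circ> \<pi>"])
    using t C_comp C_inv by (auto simp: o_assoc permutes_inv_o[OF p])
qed

lemma bij_right: "\<tau> \<in> C \<Longrightarrow> bij_betw (\<lambda>\<pi>. \<pi> \<circ> \<tau>) C C"
proof -
  assume t: "\<tau> \<in> C"
  have p: "\<tau> permutes {0..<r}" using t C_perm by blast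
  show ?thesis
    apply (rule bij_betw_byWitness[where f'="\<lambda>\<pi>. \<pi> \<circ> inv \<tau>"])
    using t C_comp C_inv by (auto simp: o_assoc[symmetric] permutes_inv_o[OF p])
qed

lemma C_transpose:
  assumes "a < r" "b' < r" "col a = col b'"
  shows "transpose a b' \<in> C"
proof -
  have "transpose a b' permutes {0..<r}" using assms by (intro permutes_swap_id) auto
  moreover have "col (transpose a b' k) = col k" for k
    using assms by (cases "k = a"; cases "k = b'") (auto simp: transpose_def)
  ultimately show ?thesis using C_iff by blast
qed

lemma tab_C: "\<pi> \<in> C \<Longrightarrow> tabloid_of la r (\<pi> \<circ> T) = tabloid_of la r T \<circ> inv \<pi>"
  using tab_comp[OF b C_perm] .

end




lemma comp_transpose_eq:
  fixes X t :: "nat \<Rightarrow> nat"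
  assumes "t \<circ> transpose a b = t"
  shows "(X \<circ> transpose a b = t) \<longleftrightarrow> (X = t)"
proof
  assume h: "X \<circ> transpose a b = t"
  have "X = X \<circ> transpose a b \<circ> transpose a b" by (simp add: o_assoc[symmetric])
  also have "\<dots> = t \<circ> transpose a b" using h by simp
  finally show "X = t" using assms by simp
next
  assume "X = t" then show "X \<circ> transpose a b = t" using assms by simp
qed

context tabx begin

lemma caseB:
  assumes ab: "a < r" "b' < r" "a \<noteq> b'" "col a = col b'" and t: "t a = t b'"
  shows "polytabloid la r T t = 0"
    and "(\<Sum>\<pi>\<in>C. sign \<pi> * (if s \<circ> \<pi> = t then 1 else 0)) = 0"
proof -
  define \<tau> where "\<tau> = transpose a b'"
  have tC: "\<tau> \<in> C" unfolding \<tau>_def using C_transpose ab by blast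
  have st: "sign \<tau> = -1" unfolding \<tau>_def using ab by (simp add: sign_swap_id)
  have tt: "t \<circ> \<tau> = t" unfolding \<tau>_def using t by (auto simp: transpose_def fun_eq_iff)
  define g where "g \<pi> = (if tabloid_of la r (\<pi> \<circ> T) = t then sign \<pi> else 0)" for \<pi>
  have g: "g (\<tau> \<circ> \<pi>) = - g \<pi>" if p: "\<pi> \<in> C" for \<pi>
  proof -
    have bU: "bij_betw (\<pi> \<circ> T) (young_diagram la) {0..<r}" using bij_comp_perm[OF b C_perm[OF p]] .
    have "tabloid_of la r ((\<tau> \<circ> \<pi>) \<circ> T) = tabloid_of la r (\<pi> \<circ> T) \<circ> \<tau>"
      using tab_comp[OF bU C_perm[OF tC]] by (simp add: o_assoc \<tau>_def)
    then have e: "(tabloid_of la r ((\<tau> \<circ> \<pi>) \<circ> T) = t) \<longleftrightarrow> (tabloid_of la r (\<pi> \<circ> T) = t)"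
      using comp_transpose_eq[of t a b'] tt unfolding \<tau>_def by simp
    have "sign (\<tau> \<circ> \<pi>) = - sign \<pi>"
      using sign_compose[OF C_permutation[OF tC] C_permutation[OF p]] st by simp
    then show ?thesis unfolding g_def using e by simp
  qed
  have "polytabloid la r T t = sum g C" unfolding polytabloid_def g_def by simp
  also have "\<dots> = sum (\<lambda>\<pi>. g (\<tau> \<circ> \<pi>)) C" using sum.reindex_bij_betw[OF bij_left[OF tC], of g] by simp
  also have "\<dots> = - sum g C" using g by (simp add: sum_negf)
  finally show "polytabloid la r T t = 0" unfolding polytabloid_def g_def by simp
  define h where "h \<pi> = sign \<pi> * (if s \<circ> \<pi> = t then 1 else 0)" for \<pi>
  have h: "h (\<pi> \<circ> \<tau>) = - h \<pi>" if p: "\<pi> \<in> C" for \<pi>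
  proof -
    have e: "(s \<circ> (\<pi> \<circ> \<tau>) = t) \<longleftrightarrow> (s \<circ> \<pi> = t)"
      using comp_transpose_eq[of t a b' "s \<circ> \<pi>"] tt unfolding \<tau>_def by (simp add: o_assoc)
    have "sign (\<pi> \<circ> \<tau>) = - sign \<pi>"
      using sign_compose[OF C_permutation[OF p] C_permutation[OF tC]] st by simp
    then show ?thesis unfolding h_def using e by simp
  qed
  have "sum h C = sum (\<lambda>\<pi>. h (\<pi> \<circ> \<tau>)) C" using sum.reindex_bij_betw[OF bij_right[OF tC], of h] by simp
  also have "\<dots> = - sum h C" using h by (simp add: sum_negf)
  finally show "(\<Sum>\<pi>\<in>C. sign \<pi> * (if s \<circ> \<pi> = t then 1 else 0)) = 0" unfolding h_def by simp
qed

lemma C_unique: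
  assumes p: "\<pi> \<in> C" and p0: "\<pi>0 \<in> C"
    and e: "tabloid_of la r (\<pi> \<circ> T) = tabloid_of la r (\<pi>0 \<circ> T)"
  shows "\<pi> = \<pi>0"
proof
  fix m
  show "\<pi> m = \<pi>0 m"
  proof (cases "m < r")
    case False
    then show ?thesis using perm_out[OF C_perm[OF p]] perm_out[OF C_perm[OF p0]] by simp
  next
    case True
    define \<rho> where "\<rho> = inv \<pi> \<circ> \<pi>0"
    have rC: "\<rho> \<in> C" unfolding \<rho>_def using C_comp C_inv p p0 by blast
    have km: "\<pi>0 m < r" using True perm_lt[OF C_perm[OF p0]] by blast
    have "tabloid_of la r (\<pi> \<circ> T) (\<pi>0 m) = tabloid_of la r (\<pi>0 \<circ> T) (\<pi>0 m)" using e by simp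
    then have "fst (pos la T (inv \<pi> (\<pi>0 m))) = fst (pos la T (inv \<pi>0 (\<pi>0 m)))"
      using tabloid_of_comp[OF b C_perm[OF p]] tabloid_of_comp[OF b C_perm[OF p0]] km by simp
    then have r1: "row (\<rho> m) = row m" unfolding \<rho>_def using permutes_inverses(2)[OF C_perm[OF p0]] by simp
    have r2: "col (\<rho> m) = col m" using C_col[OF rC True] .
    have "pos la T (\<rho> m) = pos la T m" using r1 r2 by (simp add: prod_eq_iff)
    then have "\<rho> m = m" using pos_inj[OF b] True perm_lt[OF C_perm[OF rC]] by blast
    then have "\<pi> (inv \<pi> (\<pi>0 m)) = \<pi> m" unfolding \<rho>_def by simp
    then show ?thesis using permutes_inverses(1)[OF C_perm[OF p]] by simp
  qed
qed

lemma caseA: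
  assumes p0: "\<pi>0 \<in> C" and t: "t = tabloid_of la r (\<pi>0 \<circ> T)"
  shows "polytabloid la r T t = sign \<pi>0"
    and "(\<Sum>\<pi>\<in>C. sign \<pi> * (if s \<circ> \<pi> = t then 1 else 0)) = sign \<pi>0 * polytabloid la r T s"
proof -
  have "polytabloid la r T t = (\<Sum>\<pi>\<in>C. if \<pi> = \<pi>0 then sign \<pi> else 0)"
    unfolding polytabloid_def t using C_unique p0 by (intro sum.cong) auto
  also have "\<dots> = sign \<pi>0" using p0 finite_C by simp
  finally show "polytabloid la r T t = sign \<pi>0" .
  define h where "h \<rho> = sign (\<rho> \<circ> inv \<pi>0) * (if s = tabloid_of la r (\<rho> \<circ> T) then 1 else 0)" for \<rho>
  have hh: "sign \<pi> * (if s \<circ> \<pi> = t then 1 else 0) = h (\<pi> \<circ> \<pi>0)" if p: "\<pi> \<in> C" for \<pi>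
  proof -
    have pp: "\<pi> permutes {0..<r}" using C_perm[OF p] .
    have bU: "bij_betw (\<pi>0 \<circ> T) (young_diagram la) {0..<r}" using bij_comp_perm[OF b C_perm[OF p0]] .
    have "tabloid_of la r ((\<pi> \<circ> \<pi>0) \<circ> T) = t \<circ> inv \<pi>"
      using tab_comp[OF bU pp] t by (simp add: o_assoc)
    moreover have "(s \<circ> \<pi> = t) \<longleftrightarrow> (s = t \<circ> inv \<pi>)"
    proof
      assume "s \<circ> \<pi> = t" then show "s = t \<circ> inv \<pi>"
        by (auto simp: fun_eq_iff permutes_inverses(1)[OF pp] dest: spec[of _ "inv \<pi> _"])
    next
      assume "s = t \<circ> inv \<pi>" then show "s \<circ> \<pi> = t"
        by (auto simp: fun_eq_iff permutes_inverses(2)[OF pp])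
    qed
    moreover have "\<pi> \<circ> \<pi>0 \<circ> inv \<pi>0 = \<pi>"
      by (simp add: o_assoc[symmetric] permutes_inv_o[OF C_perm[OF p0]])
    ultimately show ?thesis unfolding h_def by simp
  qed
  have "(\<Sum>\<pi>\<in>C. sign \<pi> * (if s \<circ> \<pi> = t then 1 else 0)) = (\<Sum>\<pi>\<in>C. h (\<pi> \<circ> \<pi>0))"
    using hh by (intro sum.cong) auto
  also have "\<dots> = sum h C" using sum.reindex_bij_betw[OF bij_right[OF p0], of h] .
  also have "\<dots> = (\<Sum>\<rho>\<in>C. sign \<pi>0 * (if tabloid_of la r (\<rho> \<circ> T) = s then sign \<rho> else 0))"
  proof (intro sum.cong refl)
    fix \<rho> assume rC: "\<rho> \<in> C"
    have "sign (\<rho> \<circ> inv \<pi>0) = sign \<rho> * sign \<pi>0"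
      using sign_compose[OF C_permutation[OF rC] C_permutation[OF C_inv[OF p0]]]
        sign_inverse[OF C_permutation[OF p0]] by simp
    then show "h \<rho> = sign \<pi>0 * (if tabloid_of la r (\<rho> \<circ> T) = s then sign \<rho> else 0)"
      unfolding h_def by auto
  qed
  also have "\<dots> = sign \<pi>0 * polytabloid la r T s"
    unfolding polytabloid_def by (simp add: sum_distrib_left)
  finally show "(\<Sum>\<pi>\<in>C. sign \<pi> * (if s \<circ> \<pi> = t then 1 else 0)) = sign \<pi>0 * polytabloid la r T s" .
qed

end



lemma sum_distinct_nat:
  fixes A :: "nat set"
  assumes "finite A"
  shows "\<Sum>{..<card A} \<le> \<Sum>A \<and> (\<Sum>A = \<Sum>{..<card A} \<longrightarrow> A = {..<card A})"
  using assms
proof (induction "card A" arbitrary: A)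
  case 0
  then show ?case by simp
next
  case (Suc n)
  have ne: "A \<noteq> {}" using Suc.hyps(2) by auto
  define m where "m = Max A"
  have mA: "m \<in> A" unfolding m_def using Max_in[OF Suc.prems ne] .
  define B where "B = A - {m}"
  have fB: "finite B" unfolding B_def using Suc.prems by simp
  have cB: "n = card B" unfolding B_def using Suc.hyps(2) mA Suc.prems by simp
  have IH: "\<Sum>{..<card B} \<le> \<Sum>B \<and> (\<Sum>B = \<Sum>{..<card B} \<longrightarrow> B = {..<card B})"
    using Suc.hyps(1)[OF cB fB] .
  have "A \<subseteq> {..m}" unfolding m_def using Suc.prems by auto
  then have "card A \<le> card {..m}" by (intro card_mono) auto
  then have mn: "n \<le> m" using Suc.hyps(2) by simp
  have sA: "\<Sum>A = m + \<Sum>B" unfolding B_def using Suc.prems mA by (simp add: sum.remove)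
  have sN: "\<Sum>{..<card A} = n + \<Sum>{..<n}" using Suc.hyps(2)[symmetric] by simp
  show ?case
  proof
    show "\<Sum>{..<card A} \<le> \<Sum>A" using sA sN IH cB mn by simp
    show "\<Sum>A = \<Sum>{..<card A} \<longrightarrow> A = {..<card A}"
    proof
      assume eq: "\<Sum>A = \<Sum>{..<card A}"
      have le: "\<Sum>{..<n} \<le> \<Sum>B" using IH cB by simp
      have "m = n" and "\<Sum>B = \<Sum>{..<n}" using eq sA sN le mn by linarith+
      then have "B = {..<n}" using IH cB by simp
      then have "A = insert n {..<n}" using \<open>m = n\<close> mA unfolding B_def by blast
      then show "A = {..<card A}" using Suc.hyps(2)[symmetric] lessThan_Suc by simp
    qed
  qed
qed

lemma downclosed_nat:
  fixes A :: "nat set"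
  assumes f: "finite A" and d: "\<And>i i'. i \<in> A \<Longrightarrow> i' < i \<Longrightarrow> i' \<in> A"
  shows "A = {..<card A}"
proof (cases "A = {}")
  case True then show ?thesis by simp
next
  case False
  define m where "m = Max A"
  have mA: "m \<in> A" unfolding m_def using Max_in[OF f False] .
  have "A = {..<Suc m}"
  proof
    show "A \<subseteq> {..<Suc m}" unfolding m_def using f by (auto simp: less_Suc_eq_le)
    show "{..<Suc m} \<subseteq> A" using mA d by (auto simp: less_Suc_eq)
  qed
  then show ?thesis by simp
qed

definition colset :: "nat list \<Rightarrow> nat \<Rightarrow> nat set" where
  "colset la j = {i. i < length la \<and> j < la ! i}"

lemma colset_eq:
  assumes "sorted (rev la)"
  shows "colset la j = {..<card (colset la j)}"
proof (rule downclosed_nat)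
  show "finite (colset la j)" unfolding colset_def by (rule finite_subset[of _ "{..<length la}"]) auto
  fix i i' assume "i \<in> colset la j" "i' < i"
  then show "i' \<in> colset la j" unfolding colset_def
    using sorted_rev_nth_mono[OF assms, of i' i] by auto
qed

lemma finite_colset: "finite (colset la j)"
  unfolding colset_def by (rule finite_subset[of _ "{..<length la}"]) auto

lemma sum_D_cols:
  "(\<Sum>p\<in>young_diagram la. F p) = (\<Sum>j\<in>snd ` young_diagram la. \<Sum>i\<in>colset la j. F (i, j))"
proof -
  have "(\<Sum>p\<in>young_diagram la. F p) = (\<Sum>j\<in>snd ` young_diagram la. \<Sum>p\<in>{p\<in>young_diagram la. snd p = j}. F p)"
    by (rule sum.group[symmetric, OF finite_D finite_imageI[OF finite_D]]) simp
  also have "\<dots> = (\<Sum>j\<in>snd ` young_diagram la. \<Sum>i\<in>colset la j. F (i, j))"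
  proof (intro sum.cong refl)
    fix j
    have "{p\<in>young_diagram la. snd p = j} = (\<lambda>i. (i, j)) ` colset la j"
      unfolding colset_def young_diagram_def by auto
    moreover have "inj_on (\<lambda>i. (i, j)) (colset la j)" by (auto simp: inj_on_def)
    ultimately show "(\<Sum>p\<in>{p\<in>young_diagram la. snd p = j}. F p) = (\<Sum>i\<in>colset la j. F (i, j))"
      by (simp add: sum.reindex)
  qed
  finally show ?thesis .
qed

lemma sum_D_rows:
  "(\<Sum>p\<in>young_diagram la. fst p) = (\<Sum>i<length la. i * la ! i)"
proof -
  have "(\<Sum>p\<in>young_diagram la. fst p) = (\<Sum>i<length la. \<Sum>p\<in>{p\<in>young_diagram la. fst p = i}. fst p)"
    by (rule sum.group[symmetric, OF finite_D finite_lessThan]) (auto simp: young_diagram_def)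
  also have "\<dots> = (\<Sum>i<length la. i * la ! i)"
  proof (intro sum.cong refl)
    fix i assume "i \<in> {..<length la}"
    have "{p\<in>young_diagram la. fst p = i} = (\<lambda>j. (i, j)) ` {..<la ! i}"
      using \<open>i \<in> _\<close> unfolding young_diagram_def by auto
    moreover have "inj_on (\<lambda>j. (i, j)) {..<la ! i}" by (auto simp: inj_on_def)
    ultimately have "card {p\<in>young_diagram la. fst p = i} = la ! i" by (simp add: card_image)
    moreover have "(\<Sum>p\<in>{p\<in>young_diagram la. fst p = i}. fst p) = (\<Sum>p\<in>{p\<in>young_diagram la. fst p = i}. i)"
      by (intro sum.cong) auto
    ultimately show "(\<Sum>p\<in>{p\<in>young_diagram la. fst p = i}. fst p) = i * la ! i" by simp
  qed
  finally show ?thesis .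
qed

lemma sum_tabloid:
  assumes t: "t \<in> tabloids la r"
  shows "(\<Sum>k\<in>{0..<r}. t k) = (\<Sum>i<length la. i * la ! i)"
proof -
  have "(\<Sum>k\<in>{0..<r}. t k) = (\<Sum>i<length la. \<Sum>k\<in>{k\<in>{0..<r}. t k = i}. t k)"
    by (rule sum.group[symmetric, OF finite_atLeastLessThan finite_lessThan]) (use t in \<open>auto simp: tabloids_def\<close>)
  also have "\<dots> = (\<Sum>i<length la. i * la ! i)"
  proof (intro sum.cong refl)
    fix i assume i: "i \<in> {..<length la}"
    have "{k\<in>{0..<r}. t k = i} = {k. k < r \<and> t k = i}" by auto
    then have "card {k\<in>{0..<r}. t k = i} = la ! i" using t i by (simp add: tabloids_def)
    moreover have "(\<Sum>k\<in>{k\<in>{0..<r}. t k = i}. t k) = (\<Sum>k\<in>{k\<in>{0..<r}. t k = i}. i)"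
      by (intro sum.cong) auto
    ultimately show "(\<Sum>k\<in>{k\<in>{0..<r}. t k = i}. t k) = i * la ! i" by simp
  qed
  finally show ?thesis .
qed




context tabx begin

lemma caseA_exists:
  assumes part: "is_partition la r" and t: "t \<in> tabloids la r"
    and nH: "\<And>a b'. a < r \<Longrightarrow> b' < r \<Longrightarrow> a \<noteq> b' \<Longrightarrow> col a = col b' \<Longrightarrow> t a \<noteq> t b'"
  shows "\<exists>\<pi>0\<in>C. t = tabloid_of la r (\<pi>0 \<circ> T)"
proof -
  have srt: "sorted (rev la)" using part by (simp add: is_partition_def)
  let ?D = "young_diagram la"
  let ?W = "snd ` ?D"
  define A where "A j = (\<lambda>i. t (T (i, j))) ` colset la j" for j
  have colD: "(i, j) \<in> ?D \<longleftrightarrow> i \<in> colset la j" for i j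
    by (simp add: young_diagram_def colset_def)
  have injA: "inj_on (\<lambda>i. t (T (i, j))) (colset la j)" for j
  proof (rule inj_onI)
    fix i i' assume i: "i \<in> colset la j" and i': "i' \<in> colset la j" and e: "t (T (i, j)) = t (T (i', j))"
    have d: "(i,j) \<in> ?D" "(i',j) \<in> ?D" using i i' colD by auto
    show "i = i'"
    proof (rule ccontr)
      assume "i \<noteq> i'"
      then have "T (i,j) \<noteq> T (i',j)" using pos_T[OF b d(1)] pos_T[OF b d(2)] by force
      moreover have "col (T (i,j)) = col (T (i',j))" using pos_T[OF b d(1)] pos_T[OF b d(2)] by simp
      ultimately show False using nH[OF T_lt[OF b d(1)] T_lt[OF b d(2)]] e by blast
    qed
  qed
  have cardA: "card (A j) = card (colset la j)" for j unfolding A_def using injA by (simp add: card_image)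
  have finA: "finite (A j)" for j unfolding A_def using finite_colset by simp
  have sumA: "\<Sum>(A j) = (\<Sum>i\<in>colset la j. t (T (i, j)))" for j
    unfolding A_def using injA by (simp add: sum.reindex)
  have sumI: "(\<Sum>i\<in>colset la j. i) = \<Sum>{..<card (colset la j)}" for j
    using colset_eq[OF srt, of j] by simp
  have le: "(\<Sum>i\<in>colset la j. i) \<le> (\<Sum>i\<in>colset la j. t (T (i, j)))" for j
    using sum_distinct_nat[OF finA[of j]] cardA[of j] sumA[of j] sumI[of j] by simp
  have tot: "(\<Sum>j\<in>?W. \<Sum>i\<in>colset la j. i) = (\<Sum>j\<in>?W. \<Sum>i\<in>colset la j. t (T (i, j)))"
  proof -
    have "(\<Sum>j\<in>?W. \<Sum>i\<in>colset la j. i) = (\<Sum>p\<in>?D. fst p)"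
      using sum_D_cols[where la=la and F=fst] by simp
    also have "\<dots> = (\<Sum>k\<in>{0..<r}. t k)" using sum_D_rows sum_tabloid[OF t] by simp
    also have "\<dots> = (\<Sum>p\<in>?D. t (T p))" using sum.reindex_bij_betw[OF b, of t] by simp
    also have "\<dots> = (\<Sum>j\<in>?W. \<Sum>i\<in>colset la j. t (T (i, j)))" using sum_D_cols[where la=la and F="\<lambda>p. t (T p)"] by simp
    finally show ?thesis .
  qed
  have Aeq: "A j = colset la j" if j: "j \<in> ?W" for j
  proof -
    have "(\<Sum>i\<in>colset la j. i) = (\<Sum>i\<in>colset la j. t (T (i, j)))"
      using sum_mono_inv[OF tot le j finite_imageI[OF finite_D]] by simp
    then have "\<Sum>(A j) = \<Sum>{..<card (A j)}" using sumA sumI cardA by simp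
    then have "A j = {..<card (A j)}" using sum_distinct_nat[OF finA[of j]] by simp
    then show ?thesis using cardA colset_eq[OF srt, of j] by simp
  qed
  define g where "g k = (t k, col k)" for k
  have gD: "g k \<in> ?D" if k: "k < r" for k
  proof -
    obtain i j where ij: "pos la T k = (i, j)" by fastforce
    have d: "(i,j) \<in> ?D" using pos_in[OF b k] ij by simp
    then have jW: "j \<in> ?W" by force
    have "t k = t (T (i, j))" using T_pos[OF b k] ij by simp
    then have "t k \<in> A j" unfolding A_def using d colD by auto
    then have "t k \<in> colset la j" using Aeq[OF jW] by simp
    then show ?thesis unfolding g_def using ij colD by simp
  qed
  have ginj: "inj_on g {0..<r}"
  proof (rule inj_onI)
    fix a b' assume "a \<in> {0..<r}" "b' \<in> {0..<r}" "g a = g b'"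
    then show "a = b'" unfolding g_def using nH by fastforce
  qed
  have gimg: "g ` {0..<r} = ?D"
  proof (rule card_subset_eq[OF finite_D])
    show "g ` {0..<r} \<subseteq> ?D" using gD by auto
    show "card (g ` {0..<r}) = card ?D" using card_image[OF ginj] bij_betw_same_card[OF b] by simp
  qed
  have gb: "bij_betw g {0..<r} ?D" unfolding bij_betw_def using ginj gimg by simp
  define \<rho> where "\<rho> k = (if k < r then T (g k) else k)" for k
  have "bij_betw (T \<circ> g) {0..<r} {0..<r}" using bij_betw_trans[OF gb b] .
  then have "bij_betw \<rho> {0..<r} {0..<r}" by (rule bij_betw_cong[THEN iffD1, rotated]) (simp add: \<rho>_def)
  then have rp: "\<rho> permutes {0..<r}" by (rule bij_imp_permutes) (simp add: \<rho>_def)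
  have rcol: "col (\<rho> k) = col k" if k: "k < r" for k
    using pos_T[OF b gD[OF k]] k unfolding \<rho>_def g_def by simp
  have rC: "\<rho> \<in> C" using rp rcol C_iff by blast
  have p0: "inv \<rho> \<in> C" using C_inv[OF rC] .
  have "t = tabloid_of la r (inv \<rho> \<circ> T)"
  proof
    fix k
    show "t k = tabloid_of la r (inv \<rho> \<circ> T) k"
    proof (cases "k < r")
      case True
      have "tabloid_of la r (inv \<rho> \<circ> T) k = fst (pos la T (\<rho> k))"
        using tabloid_of_comp[OF b permutes_inv[OF rp], of k] True permutes_inv_inv[OF rp] by simp
      also have "\<dots> = t k" using pos_T[OF b gD[OF True]] True unfolding \<rho>_def g_def by simp
      finally show ?thesis by simp
    next
      case False
      then show ?thesis using t tabloid_of_comp[OF b permutes_inv[OF rp], of k] by (simp add: tabloids_def)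
    qed
  qed
  then show ?thesis using p0 by blast
qed

end



lemma pos_comp:
  assumes b: "bij_betw T (young_diagram la) {0..<r}" and p: "\<pi> permutes {0..<r}" and k: "k < r"
  shows "pos la (\<pi> \<circ> T) k = pos la T (inv \<pi> k)"
proof -
  have ik: "inv \<pi> k < r" using k p by (metis perm_lt permutes_inv)
  have inj: "inj_on (\<pi> \<circ> T) (young_diagram la)"
    using b p by (meson bij_betw_def comp_inj_on inj_on_subset permutes_inj subset_UNIV)
  show ?thesis unfolding pos_def[of la "\<pi> \<circ> T"]
    apply (rule inv_into_f_eq[OF inj pos_in[OF b ik]])
    using T_pos[OF b ik] p by (simp add: permutes_inverses(1))
qed

lemma tabloid_of_in:
  assumes b: "bij_betw U (young_diagram la) {0..<r}"
  shows "tabloid_of la r U \<in> tabloids la r"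
  unfolding tabloids_def
proof (intro CollectI conjI allI impI)
  fix k :: nat
  show "r \<le> k \<Longrightarrow> tabloid_of la r U k = 0" by (simp add: tabloid_of_def)
  assume "k < r"
  then show "tabloid_of la r U k < length la"
    using pos_in[OF b \<open>k < r\<close>] tabloid_of_id[OF b] by (auto simp: young_diagram_def)
next
  fix j assume j: "j < length la"
  have "{k. k < r \<and> tabloid_of la r U k = j} = U ` ((\<lambda>c. (j, c)) ` {..<la ! j})"
  proof
    show "{k. k < r \<and> tabloid_of la r U k = j} \<subseteq> U ` ((\<lambda>c. (j, c)) ` {..<la ! j})"
    proof
      fix k assume "k \<in> {k. k < r \<and> tabloid_of la r U k = j}"
      then have k: "k < r" and e: "fst (pos la U k) = j" using tabloid_of_id[OF b] by auto
      obtain i c where ic: "pos la U k = (i, c)" by fastforce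
      have "(i,c) \<in> young_diagram la" using pos_in[OF b k] ic by simp
      then show "k \<in> U ` ((\<lambda>c. (j, c)) ` {..<la ! j})" using T_pos[OF b k] ic e
        by (auto simp: young_diagram_def)
    qed
    show "U ` ((\<lambda>c. (j, c)) ` {..<la ! j}) \<subseteq> {k. k < r \<and> tabloid_of la r U k = j}"
    proof
      fix k assume "k \<in> U ` ((\<lambda>c. (j, c)) ` {..<la ! j})"
      then obtain c where c: "c < la ! j" "k = U (j, c)" by auto
      have d: "(j, c) \<in> young_diagram la" using c j by (simp add: young_diagram_def)
      show "k \<in> {k. k < r \<and> tabloid_of la r U k = j}"
        using T_lt[OF b d] pos_T[OF b d] tabloid_of_id[OF b] c by simp
    qed
  qed
  moreover have "inj_on U ((\<lambda>c. (j, c)) ` {..<la ! j})"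
    using bij_betw_imp_inj_on[OF b] by (rule inj_on_subset) (use j in \<open>auto simp: young_diagram_def\<close>)
  moreover have "inj_on (\<lambda>c. (j, c)) {..<la ! j}" by (auto simp: inj_on_def)
  ultimately show "card {k. k < r \<and> tabloid_of la r U k = j} = la ! j"
    by (simp add: card_image)
qed

lemma finite_tabloids: "finite (tabloids la r)"
proof -
  have "tabloids la r \<subseteq> (\<lambda>f k. if k < r then f k else 0) ` ({0..<r} \<rightarrow>\<^sub>E {..<length la})"
  proof
    fix t assume t: "t \<in> tabloids la r"
    have "t = (\<lambda>k. if k < r then restrict t {0..<r} k else 0)"
      using t by (auto simp: tabloids_def fun_eq_iff)
    moreover have "restrict t {0..<r} \<in> {0..<r} \<rightarrow>\<^sub>E {..<length la}" using t by (auto simp: tabloids_def)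
    ultimately show "t \<in> (\<lambda>f k. if k < r then f k else 0) ` ({0..<r} \<rightarrow>\<^sub>E {..<length la})" by blast
  qed
  moreover have "finite ({0..<r} \<rightarrow>\<^sub>E {..<length la})" by (intro finite_PiE) auto
  ultimately show ?thesis using finite_subset by blast
qed

lemma polytabloid_supp:
  assumes b: "bij_betw T (young_diagram la) {0..<r}" and s: "s \<notin> tabloids la r"
  shows "polytabloid la r T s = 0"
proof -
  interpret tabx la r T by unfold_locales (rule b)
  have "tabloid_of la r (\<pi> \<circ> T) \<noteq> s" if "\<pi> \<in> C" for \<pi>
    using tabloid_of_in[OF bij_comp_perm[OF b C_perm[OF that]]] s by auto
  then show ?thesis unfolding polytabloid_def by (intro sum.neutral) auto
qed

lemma specht_supp:
  assumes v: "v \<in> specht la r" and s: "s \<notin> tabloids la r"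
  shows "v s = 0"
proof -
  have "polytabloid la r T s = 0" if "T \<in> tableaux la r" for T
    using polytabloid_supp[OF tab_bij[OF that] s] .
  then show ?thesis using v unfolding specht_def by (auto intro!: sum.neutral)
qed

context tabx begin

lemma key_delta:
  assumes part: "is_partition la r" and t: "t \<in> tabloids la r"
  shows "(\<Sum>\<pi>\<in>C. sign \<pi> * (if s \<circ> \<pi> = t then 1 else 0)) = polytabloid la r T t * polytabloid la r T s"
proof (cases "\<exists>a b'. a < r \<and> b' < r \<and> a \<noteq> b' \<and> col a = col b' \<and> t a = t b'")
  case True
  then obtain a b' where "a < r" "b' < r" "a \<noteq> b'" "col a = col b'" "t a = t b'" by blast
  from caseB[OF this] show ?thesis by simp
next
  case False
  then obtain \<pi>0 where "\<pi>0 \<in> C" "t = tabloid_of la r (\<pi>0 \<circ> T)"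
    using caseA_exists[OF part t] by blast
  from caseA[OF this] show ?thesis by simp
qed

definition kap :: "((nat \<Rightarrow> nat) \<Rightarrow> int) \<Rightarrow> ((nat \<Rightarrow> nat) \<Rightarrow> int)" where
  "kap u = (\<lambda>s. \<Sum>\<pi>\<in>C. sign \<pi> * u (s \<circ> \<pi>))"

lemma kap_formula:
  assumes part: "is_partition la r" and u: "\<And>s. s \<notin> tabloids la r \<Longrightarrow> u s = 0"
  shows "kap u s = (\<Sum>t\<in>tabloids la r. u t * polytabloid la r T t) * polytabloid la r T s"
proof -
  have e: "u (s \<circ> \<pi>) = (\<Sum>t\<in>tabloids la r. u t * (if s \<circ> \<pi> = t then 1 else 0))" for \<pi>
  proof -
    have "(\<Sum>t\<in>tabloids la r. u t * (if s \<circ> \<pi> = t then 1 else 0))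
        = (\<Sum>t\<in>tabloids la r. if s \<circ> \<pi> = t then u t else 0)" by (intro sum.cong) auto
    also have "\<dots> = (if s \<circ> \<pi> \<in> tabloids la r then u (s \<circ> \<pi>) else 0)"
      using finite_tabloids by (simp add: sum.delta)
    also have "\<dots> = u (s \<circ> \<pi>)" using u by auto
    finally show ?thesis by simp
  qed
  have "kap u s = (\<Sum>\<pi>\<in>C. \<Sum>t\<in>tabloids la r. u t * (sign \<pi> * (if s \<circ> \<pi> = t then 1 else 0)))"
    unfolding kap_def e by (simp add: sum_distrib_left mult_ac)
  also have "\<dots> = (\<Sum>t\<in>tabloids la r. u t * (\<Sum>\<pi>\<in>C. sign \<pi> * (if s \<circ> \<pi> = t then 1 else 0)))"
    by (subst sum.swap) (simp add: sum_distrib_left)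
  also have "\<dots> = (\<Sum>t\<in>tabloids la r. u t * (polytabloid la r T t * polytabloid la r T s))"
    using key_delta[OF part] by (intro sum.cong) auto
  also have "\<dots> = (\<Sum>t\<in>tabloids la r. u t * polytabloid la r T t) * polytabloid la r T s"
    unfolding sum_distrib_right by (simp add: mult.assoc)
  finally show ?thesis .
qed

end



lemma conj_eq1:
  assumes p: "\<pi> permutes S"
  shows "inv \<pi> \<circ> (\<pi> \<circ> \<rho> \<circ> inv \<pi>) \<circ> \<pi> = \<rho>" and "\<pi> \<circ> (inv \<pi> \<circ> \<rho> \<circ> \<pi>) \<circ> inv \<pi> = \<rho>"
  by (auto simp: fun_eq_iff permutes_inverses[OF p])

lemma column_group_perm_bij:
  assumes b: "bij_betw T (young_diagram la) {0..<r}" and p: "\<pi> permutes {0..<r}"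
  shows "bij_betw (\<lambda>\<rho>. \<pi> \<circ> \<rho> \<circ> inv \<pi>) (column_group la r T) (column_group la r (\<pi> \<circ> T))"
proof -
  have b2: "bij_betw (\<pi> \<circ> T) (young_diagram la) {0..<r}" using bij_comp_perm[OF b p] .
  have pi: "inv \<pi> permutes {0..<r}" using permutes_inv[OF p] .
  have C2: "\<sigma> \<in> column_group la r (\<pi> \<circ> T) \<longleftrightarrow> \<sigma> permutes {0..<r} \<and>
      (\<forall>k<r. snd (pos la T (inv \<pi> (\<sigma> k))) = snd (pos la T (inv \<pi> k)))" for \<sigma>
  proof -
    have "\<sigma> permutes {0..<r} \<Longrightarrow> k < r \<Longrightarrow>
      snd (pos la (\<pi> \<circ> T) (\<sigma> k)) = snd (pos la (\<pi> \<circ> T) k) \<longleftrightarrow>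
      snd (pos la T (inv \<pi> (\<sigma> k))) = snd (pos la T (inv \<pi> k))" for k
      using pos_comp[OF b p] perm_lt[of \<sigma> r k] by simp
    then show ?thesis using column_group_alt[OF b2] by auto
  qed
  have C1: "\<rho> \<in> column_group la r T \<longleftrightarrow> \<rho> permutes {0..<r} \<and>
      (\<forall>k<r. snd (pos la T (\<rho> k)) = snd (pos la T k))" for \<rho>
    using column_group_alt[OF b] by auto
  show ?thesis
  proof (rule bij_betw_byWitness[where f'="\<lambda>\<sigma>. inv \<pi> \<circ> \<sigma> \<circ> \<pi>"])
    show "\<forall>a\<in>column_group la r T. inv \<pi> \<circ> (\<pi> \<circ> a \<circ> inv \<pi>) \<circ> \<pi> = a" using conj_eq1[OF p] by blast
    show "\<forall>a\<in>column_group la r (\<pi> \<circ> T). \<pi> \<circ> (inv \<pi> \<circ> a \<circ> \<pi>) \<circ> inv \<pi> = a" using conj_eq1[OF p] by blast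
    show "(\<lambda>\<rho>. \<pi> \<circ> \<rho> \<circ> inv \<pi>) ` column_group la r T \<subseteq> column_group la r (\<pi> \<circ> T)"
    proof clarify
      fix \<rho> assume "\<rho> \<in> column_group la r T"
      then have r1: "\<rho> permutes {0..<r}" and r2: "\<forall>k<r. snd (pos la T (\<rho> k)) = snd (pos la T k)"
        using C1 by auto
      have "\<pi> \<circ> \<rho> \<circ> inv \<pi> permutes {0..<r}" using permutes_compose[OF pi permutes_compose[OF r1 p]] .
      moreover have "snd (pos la T (inv \<pi> ((\<pi> \<circ> \<rho> \<circ> inv \<pi>) k))) = snd (pos la T (inv \<pi> k))" if k: "k < r" for k
        using r2 perm_lt[OF pi, of k] k permutes_inverses(2)[OF p] by simp
      ultimately show "\<pi> \<circ> \<rho> \<circ> inv \<pi> \<in> column_group la r (\<pi> \<circ> T)" using C2 by blast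
    qed
    show "(\<lambda>\<sigma>. inv \<pi> \<circ> \<sigma> \<circ> \<pi>) ` column_group la r (\<pi> \<circ> T) \<subseteq> column_group la r T"
    proof clarify
      fix \<sigma> assume "\<sigma> \<in> column_group la r (\<pi> \<circ> T)"
      then have s1: "\<sigma> permutes {0..<r}" and s2: "\<forall>k<r. snd (pos la T (inv \<pi> (\<sigma> k))) = snd (pos la T (inv \<pi> k))"
        using C2 by auto
      have "inv \<pi> \<circ> \<sigma> \<circ> \<pi> permutes {0..<r}" using permutes_compose[OF p permutes_compose[OF s1 pi]] .
      moreover have "snd (pos la T ((inv \<pi> \<circ> \<sigma> \<circ> \<pi>) m)) = snd (pos la T m)" if m: "m < r" for m
        using s2 perm_lt[OF p, of m] m permutes_inverses(2)[OF p] by (metis comp_apply)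
      ultimately show "inv \<pi> \<circ> \<sigma> \<circ> \<pi> \<in> column_group la r T" using C1 by blast
    qed
  qed
qed

lemma polytabloid_perm:
  assumes b: "bij_betw T (young_diagram la) {0..<r}" and p: "\<pi> permutes {0..<r}"
  shows "perm_vec \<pi> (polytabloid la r T) = polytabloid la r (\<pi> \<circ> T)"
proof
  fix s
  interpret tabx la r T by unfold_locales (rule b)
  have pp: "permutation \<pi>" using p permutation_permutes by blast
  define g where "g \<sigma> = (if tabloid_of la r (\<sigma> \<circ> (\<pi> \<circ> T)) = s then sign \<sigma> else 0)" for \<sigma>
  have "polytabloid la r (\<pi> \<circ> T) s = sum g (column_group la r (\<pi> \<circ> T))"
    unfolding polytabloid_def g_def ..
  also have "\<dots> = (\<Sum>\<rho>\<in>C. g (\<pi> \<circ> \<rho> \<circ> inv \<pi>))"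
    using sum.reindex_bij_betw[OF column_group_perm_bij[OF b p], of g] by simp
  also have "\<dots> = (\<Sum>\<rho>\<in>C. if tabloid_of la r (\<rho> \<circ> T) = s \<circ> \<pi> then sign \<rho> else 0)"
  proof (intro sum.cong refl)
    fix \<rho> assume rC: "\<rho> \<in> C"
    have e1: "(\<pi> \<circ> \<rho> \<circ> inv \<pi>) \<circ> (\<pi> \<circ> T) = \<pi> \<circ> (\<rho> \<circ> T)"
      by (auto simp: fun_eq_iff permutes_inverses[OF p])
    have "tabloid_of la r (\<pi> \<circ> (\<rho> \<circ> T)) = tabloid_of la r (\<rho> \<circ> T) \<circ> inv \<pi>"
      using tab_comp[OF bij_comp_perm[OF b C_perm[OF rC]] p] .
    moreover have "(X \<circ> inv \<pi> = s) \<longleftrightarrow> (X = s \<circ> \<pi>)" for X :: "nat \<Rightarrow> nat"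
      by (auto simp: fun_eq_iff permutes_inverses[OF p] dest: spec[of _ "\<pi> _"])
    moreover have "sign (\<pi> \<circ> \<rho> \<circ> inv \<pi>) = sign \<rho>"
    proof -
      have pi: "permutation (inv \<pi>)" using permutes_inv[OF p] permutation_permutes by blast
      have "sign (\<pi> \<circ> \<rho> \<circ> inv \<pi>) = sign \<pi> * sign \<rho> * sign (inv \<pi>)"
        using sign_compose[OF permutation_compose[OF pp C_permutation[OF rC]] pi]
          sign_compose[OF pp C_permutation[OF rC]] by simp
      then show ?thesis using sign_inverse[OF pp] by simp
    qed
    ultimately show "g (\<pi> \<circ> \<rho> \<circ> inv \<pi>) = (if tabloid_of la r (\<rho> \<circ> T) = s \<circ> \<pi> then sign \<rho> else 0)"
      unfolding g_def e1 by simp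
  qed
  also have "\<dots> = perm_vec \<pi> (polytabloid la r T) s"
    unfolding perm_vec_def polytabloid_def ..
  finally show "perm_vec \<pi> (polytabloid la r T) s = polytabloid la r (\<pi> \<circ> T) s" by simp
qed

lemma polytabloid_cong:
  assumes e: "\<And>p. p \<in> young_diagram la \<Longrightarrow> U p = U' p"
  shows "polytabloid la r U = polytabloid la r U'"
proof -
  have ex: "(\<exists>i'. (i', j) \<in> young_diagram la \<and> \<sigma> (U (i, j)) = U (i', j)) \<longleftrightarrow>
      (\<exists>i'. (i', j) \<in> young_diagram la \<and> \<sigma> (U' (i, j)) = U' (i', j))"
    if "(i, j) \<in> young_diagram la" for \<sigma> i j
    using e[OF that] e by metis
  have c: "column_group la r U = column_group la r U'"
    unfolding column_group_def by (rule Collect_cong) (use ex in blast)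
  have ii: "inv_into (young_diagram la) (\<sigma> \<circ> U) = inv_into (young_diagram la) (\<sigma> \<circ> U')" for \<sigma>
    unfolding inv_into_def using e by (auto intro!: arg_cong[where f=Eps] simp: fun_eq_iff)
  have "tabloid_of la r (\<sigma> \<circ> U) = tabloid_of la r (\<sigma> \<circ> U')" for \<sigma>
    unfolding tabloid_of_def ii[of \<sigma>] ..
  then show ?thesis unfolding polytabloid_def c by simp
qed

lemma tableaux_conj:
  assumes T: "T \<in> tableaux la r" and T': "T' \<in> tableaux la r"
  shows "\<exists>\<pi>. \<pi> permutes {0..<r} \<and> polytabloid la r T' = perm_vec \<pi> (polytabloid la r T)"
proof -
  have b: "bij_betw T (young_diagram la) {0..<r}" and b': "bij_betw T' (young_diagram la) {0..<r}"
    using T T' by (auto simp: tableaux_def)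
  define \<pi> where "\<pi> k = (if k < r then T' (pos la T k) else k)" for k
  have pb: "bij_betw (pos la T) {0..<r} (young_diagram la)"
    unfolding pos_def using bij_betw_inv_into[OF b] .
  have "bij_betw (T' \<circ> pos la T) {0..<r} {0..<r}" using bij_betw_trans[OF pb b'] .
  then have "bij_betw \<pi> {0..<r} {0..<r}" by (rule bij_betw_cong[THEN iffD1, rotated]) (simp add: \<pi>_def)
  then have p: "\<pi> permutes {0..<r}" by (rule bij_imp_permutes) (simp add: \<pi>_def)
  have "(\<pi> \<circ> T) q = T' q" if "q \<in> young_diagram la" for q
    using that T_lt[OF b that] pos_T[OF b that] by (simp add: \<pi>_def)
  then have "polytabloid la r (\<pi> \<circ> T) = polytabloid la r T'" by (rule polytabloid_cong)
  then show ?thesis using polytabloid_perm[OF b p] p by metis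
qed




lemma zscale_0 [simp]: "zscale 0 x = 0"
  by (simp add: zscale_def)

lemma zscale_x0 [simp]: "zscale a (0::'a::ab_group_add) = 0"
  by (simp add: zscale_def)

lemma zscale_add_vec: "zscale a (x + y) = zscale a x + zscale a (y::'a::ab_group_add)"
  by (simp add: zscale_def sum.distrib)

lemma zscale_succ: "zscale (a + 1) x = zscale a x + (x::'a::ab_group_add)"
proof (cases "0 \<le> a")
  case True
  then have "nat (a + 1) = Suc (nat a)" by simp
  then show ?thesis using True by (simp add: zscale_def)
next
  case False
  show ?thesis
  proof (cases "a = -1")
    case True then show ?thesis by (simp add: zscale_def)
  next
    case False
    with \<open>\<not> 0 \<le> a\<close> have "nat (- a) = Suc (nat (- (a + 1)))" by simp
    then show ?thesis using \<open>\<not> 0 \<le> a\<close> False by (simp add: zscale_def)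
  qed
qed

lemma zscale_pred: "zscale (a - 1) x = zscale a x - (x::'a::ab_group_add)"
  using zscale_succ[of "a - 1" x] by simp

lemma zscale_add_scal: "zscale (a + b) x = zscale a x + zscale b (x::'a::ab_group_add)"
proof (induction b rule: int_induct[where k=0])
  case base then show ?case by simp
next
  case (step1 i)
  have "zscale (a + (i + 1)) x = zscale ((a + i) + 1) x" by (simp add: add.assoc)
  also have "\<dots> = zscale a x + zscale i x + x" using zscale_succ[of "a + i" x] step1(2) by simp
  finally show ?case using zscale_succ[of i x] by (simp add: add.assoc)
next
  case (step2 i)
  have "zscale (a + (i - 1)) x = zscale ((a + i) - 1) x" by (simp add: algebra_simps)
  also have "\<dots> = zscale a x + zscale i x - x" using zscale_pred[of "a + i" x] step2(2) by simp
  also have "\<dots> = zscale a x + (zscale i x - x)" by (simp add: algebra_simps)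
  also have "zscale i x - x = zscale (i - 1) x" using zscale_pred[of i x] by simp
  finally show ?case .
qed

lemma zscale_mult: "zscale (a * c) x = zscale a (zscale c (x::'a::ab_group_add))"
proof (induction a rule: int_induct[where k=0])
  case base then show ?case by simp
next
  case (step1 i)
  have "zscale ((i + 1) * c) x = zscale (i * c + c) x" by (simp add: algebra_simps)
  also have "\<dots> = zscale i (zscale c x) + zscale c x" using zscale_add_scal[of "i * c" c x] step1(2) by simp
  finally show ?case using zscale_succ[of i "zscale c x"] by simp
next
  case (step2 i)
  have "zscale ((i - 1) * c) x = zscale (i * c + (- c)) x" by (simp add: algebra_simps)
  also have "\<dots> = zscale i (zscale c x) + zscale (- c) x" using zscale_add_scal[of "i * c" "- c" x] step2(2) by simp
  also have "zscale (- c) x = - zscale c x"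
    using zscale_add_scal[of c "- c" x] minus_unique[of "zscale c x" "zscale (- c) x"] by simp
  finally show ?case using zscale_pred[of i "zscale c x"] by simp
qed

lemma zscale_sum: "zscale a (\<Sum>b\<in>S. g b) = (\<Sum>b\<in>S. zscale a (g b :: 'a::ab_group_add))"
  by (induction S rule: infinite_finite_induct) (simp_all add: zscale_add_vec)

lemma torsion_free:
  assumes fr: "free_Z_module TYPE('m::ab_group_add)" and a: "a \<noteq> 0" and z: "zscale a (m::'m) = 0"
  shows "m = 0"
proof -
  obtain B :: "'m set" where B: "\<And>m::'m. \<exists>!c::'m \<Rightarrow> int. (\<forall>b. b \<notin> B \<longrightarrow> c b = 0) \<and> finite {b. c b \<noteq> 0} \<and>
      m = (\<Sum>b\<in>{b. c b \<noteq> 0}. zscale (c b) b)"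
    using fr unfolding free_Z_module_def by blast
  obtain c where c: "\<forall>b. b \<notin> B \<longrightarrow> c b = 0" "finite {b. c b \<noteq> 0}" "m = (\<Sum>b\<in>{b. c b \<noteq> 0}. zscale (c b) b)"
    using B[of m] by blast
  define c' where "c' b = a * c b" for b
  have S: "{b. c' b \<noteq> 0} = {b. c b \<noteq> 0}" using a by (auto simp: c'_def)
  have "zscale a m = (\<Sum>b\<in>{b. c' b \<noteq> 0}. zscale (c' b) b)"
    unfolding c(3) S zscale_sum by (simp add: c'_def zscale_mult)
  then have r1: "(\<forall>b. b \<notin> B \<longrightarrow> c' b = 0) \<and> finite {b. c' b \<noteq> 0} \<and> (0::'m) = (\<Sum>b\<in>{b. c' b \<noteq> 0}. zscale (c' b) b)"
    using c S z by (auto simp: c'_def)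
  have r2: "(\<forall>b. b \<notin> B \<longrightarrow> (\<lambda>_. 0::int) b = 0) \<and> finite {b. (\<lambda>_. 0::int) b \<noteq> 0} \<and>
      (0::'m) = (\<Sum>b\<in>{b. (\<lambda>_. 0::int) b \<noteq> 0}. zscale ((\<lambda>_. 0::int) b) b)" by simp
  obtain c0 where c0: "\<And>y. (\<forall>b. b \<notin> B \<longrightarrow> y b = 0) \<and> finite {b. y b \<noteq> 0} \<and>
      (0::'m) = (\<Sum>b\<in>{b. y b \<noteq> 0}. zscale (y b) b) \<Longrightarrow> y = c0"
    using B[of 0] by (elim ex1E) blast
  have "c' = (\<lambda>_. 0)" using c0[OF r1] c0[OF r2] by simp
  then have "{b. c b \<noteq> 0} = {}" using S by auto
  then show ?thesis using c(3) by simp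
qed




lemma specht_I:
  "finite F \<Longrightarrow> F \<subseteq> tableaux la r \<Longrightarrow> (\<lambda>s. \<Sum>T\<in>F. c T * polytabloid la r T s) \<in> specht la r"
  unfolding specht_def by blast

lemma specht_zero: "(\<lambda>s. 0) \<in> specht la r"
  using specht_I[of "{}" la r] by simp

lemma specht_poly: "T \<in> tableaux la r \<Longrightarrow> polytabloid la r T \<in> specht la r"
  using specht_I[of "{T}" la r "\<lambda>_. 1"] by simp

lemma specht_add:
  assumes x: "x \<in> specht la r" and y: "y \<in> specht la r"
  shows "(\<lambda>s. x s + y s) \<in> specht la r"
proof -
  obtain F1 c1 where 1: "finite F1" "F1 \<subseteq> tableaux la r" "x = (\<lambda>s. \<Sum>T\<in>F1. c1 T * polytabloid la r T s)"
    using x unfolding specht_def by blast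
  obtain F2 c2 where 2: "finite F2" "F2 \<subseteq> tableaux la r" "y = (\<lambda>s. \<Sum>T\<in>F2. c2 T * polytabloid la r T s)"
    using y unfolding specht_def by blast
  define c where "c T = (if T \<in> F1 then c1 T else 0) + (if T \<in> F2 then c2 T else 0)" for T
  have fin: "finite (F1 \<union> F2)" using 1 2 by simp
  have "(\<Sum>T\<in>F1 \<union> F2. c T * polytabloid la r T s) =
      (\<Sum>T\<in>F1 \<union> F2. if T \<in> F1 then c1 T * polytabloid la r T s else 0) +
      (\<Sum>T\<in>F1 \<union> F2. if T \<in> F2 then c2 T * polytabloid la r T s else 0)" for s
    unfolding sum.distrib[symmetric] c_def by (intro sum.cong) (auto simp: distrib_right)
  also have "\<dots> s = x s + y s" for s
    using sum.inter_restrict[OF fin, of "\<lambda>T. c1 T * polytabloid la r T s" F1]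
      sum.inter_restrict[OF fin, of "\<lambda>T. c2 T * polytabloid la r T s" F2] 1(3) 2(3)
    by (simp add: Int_absorb1 Int_absorb2 Un_Int_eq)
  finally have "(\<lambda>s. x s + y s) = (\<lambda>s. \<Sum>T\<in>F1 \<union> F2. c T * polytabloid la r T s)" by simp
  then show ?thesis using specht_I[OF fin] 1(2) 2(2) by simp
qed

lemma specht_scale:
  assumes x: "x \<in> specht la r"
  shows "(\<lambda>s. a * x s) \<in> specht la r"
proof -
  obtain F c where 1: "finite F" "F \<subseteq> tableaux la r" "x = (\<lambda>s. \<Sum>T\<in>F. c T * polytabloid la r T s)"
    using x unfolding specht_def by blast
  have "(\<lambda>s. a * x s) = (\<lambda>s. \<Sum>T\<in>F. (a * c T) * polytabloid la r T s)"
    using 1(3) by (simp add: sum_distrib_left mult.assoc)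
  then show ?thesis using specht_I[OF 1(1,2)] by simp
qed

lemma specht_sum:
  assumes "finite I" "\<And>i. i \<in> I \<Longrightarrow> g i \<in> specht la r"
  shows "(\<lambda>s. \<Sum>i\<in>I. g i s) \<in> specht la r"
  using assms
proof (induction I rule: finite_induct)
  case empty then show ?case using specht_zero by simp
next
  case (insert a I)
  then show ?case using specht_add[of "g a" la r "\<lambda>s. \<Sum>i\<in>I. g i s"] by simp
qed

lemma specht_perm:
  assumes p: "\<pi> permutes {0..<r}" and x: "x \<in> specht la r"
  shows "perm_vec \<pi> x \<in> specht la r"
proof -
  obtain F c where 1: "finite F" "F \<subseteq> tableaux la r" "x = (\<lambda>s. \<Sum>T\<in>F. c T * polytabloid la r T s)"
    using x unfolding specht_def by blast
  have "perm_vec \<pi> x = (\<lambda>s. \<Sum>T\<in>F. (\<lambda>s. c T * polytabloid la r (\<pi> \<circ> T) s) s)"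
  proof
    fix s
    have "polytabloid la r T (s \<circ> \<pi>) = polytabloid la r (\<pi> \<circ> T) s" if "T \<in> F" for T
      using polytabloid_perm[OF tab_bij p, of T la] that 1(2) unfolding perm_vec_def by (metis subsetD)
    then show "perm_vec \<pi> x s = (\<Sum>T\<in>F. (\<lambda>s. c T * polytabloid la r (\<pi> \<circ> T) s) s)"
      unfolding 1(3) perm_vec_def by simp
  qed
  moreover have "(\<lambda>s. c T * polytabloid la r (\<pi> \<circ> T) s) \<in> specht la r" if "T \<in> F" for T
  proof -
    have "\<pi> \<circ> T \<in> tableaux la r" using bij_comp_perm[OF tab_bij p] that 1(2) by (auto simp: tableaux_def)
    then show ?thesis using specht_scale[OF specht_poly] by blast
  qed
  ultimately show ?thesis using specht_sum[OF 1(1)] by simp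
qed

locale homx =
  fixes la :: "nat list" and r :: nat
    and act :: "(nat \<Rightarrow> nat) \<Rightarrow> 'm::ab_group_add \<Rightarrow> 'm"
    and f :: "((nat \<Rightarrow> nat) \<Rightarrow> int) \<Rightarrow> 'm"
  assumes hom: "specht_hom la r act f"
begin

lemma f_add: "x \<in> specht la r \<Longrightarrow> y \<in> specht la r \<Longrightarrow> f (\<lambda>s. x s + y s) = f x + f y"
  using hom unfolding specht_hom_def by blast

lemma f_perm: "\<pi> permutes {0..<r} \<Longrightarrow> x \<in> specht la r \<Longrightarrow> f (perm_vec \<pi> x) = act \<pi> (f x)"
  using hom unfolding specht_hom_def by blast

lemma f_zero: "f (\<lambda>s. 0) = 0"
  using f_add[OF specht_zero specht_zero] by simp

lemma f_sum:
  assumes "finite I" "\<And>i. i \<in> I \<Longrightarrow> g i \<in> specht la r"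
  shows "f (\<lambda>s. \<Sum>i\<in>I. g i s) = (\<Sum>i\<in>I. f (g i))"
  using assms
proof (induction I rule: finite_induct)
  case empty then show ?case using f_zero by simp
next
  case (insert a I)
  have "f (\<lambda>s. \<Sum>i\<in>insert a I. g i s) = f (\<lambda>s. g a s + (\<lambda>s. \<Sum>i\<in>I. g i s) s)"
    using insert(1,2) by simp
  also have "\<dots> = f (g a) + f (\<lambda>s. \<Sum>i\<in>I. g i s)"
    using f_add[of "g a" "\<lambda>s. \<Sum>i\<in>I. g i s"] insert specht_sum[OF insert(1)] by simp
  finally show ?case using insert by simp
qed

lemma f_scale:
  assumes x: "x \<in> specht la r"
  shows "f (\<lambda>s. a * x s) = zscale a (f x)"
proof (induction a rule: int_induct[where k=0])
  case base then show ?case using f_zero by simp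
next
  case (step1 i)
  have "f (\<lambda>s. (i + 1) * x s) = f (\<lambda>s. (\<lambda>s. i * x s) s + x s)" by (simp add: algebra_simps)
  also have "\<dots> = f (\<lambda>s. i * x s) + f x" using f_add[OF specht_scale[OF x] x] by simp
  finally show ?case using step1(2) zscale_succ[of i "f x"] by simp
next
  case (step2 i)
  have mx: "(\<lambda>s. (-1) * x s) \<in> specht la r" using specht_scale[OF x] .
  have "f (\<lambda>s. (i - 1) * x s) = f (\<lambda>s. (\<lambda>s. i * x s) s + (\<lambda>s. (-1) * x s) s)" by (simp add: algebra_simps)
  also have "\<dots> = f (\<lambda>s. i * x s) + f (\<lambda>s. (-1) * x s)" using f_add[OF specht_scale[OF x] mx] by simp
  also have "f (\<lambda>s. (-1) * x s) = - f x"
  proof -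
    have "f (\<lambda>s. x s + (\<lambda>s. (-1) * x s) s) = f x + f (\<lambda>s. (-1) * x s)" using f_add[OF x mx] .
    then have "0 = f x + f (\<lambda>s. (-1) * x s)" using f_zero by simp
    then show ?thesis using minus_unique[of "f x" "f (\<lambda>s. (-1) * x s)"] by simp
  qed
  finally show ?case using step2(2) zscale_pred[of i "f x"] by simp
qed

end




lemma act_zero:
  assumes "ZS_module r act" "\<pi> permutes {0..<r}"
  shows "act \<pi> (0::'m::ab_group_add) = 0"
proof -
  have "act \<pi> (0 + 0) = act \<pi> 0 + act \<pi> 0" using assms unfolding ZS_module_def by blast
  then show ?thesis by simp
qed

theorem lemma3p3:
  fixes la :: "nat list" and r :: nat
    and act :: "(nat \<Rightarrow> nat) \<Rightarrow> 'm::ab_group_add \<Rightarrow> 'm"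
    and f :: "((nat \<Rightarrow> nat) \<Rightarrow> int) \<Rightarrow> 'm"
  assumes "is_partition la r"
    and "ZS_module r act"
    and "free_Z_module TYPE('m)"
    and "specht_hom la r act f"
    and "\<exists>x\<in>specht la r. f x \<noteq> 0"
  shows "inj_on f (specht la r)"
proof (rule inj_onI)
  interpret homx la r act f by unfold_locales (rule assms(4))
  let ?V = "specht la r"
  let ?Tab = "tabloids la r"
  fix x y assume x: "x \<in> ?V" and y: "y \<in> ?V" and fxy: "f x = f y"
  show "x = y"
  proof (rule ccontr)
    assume ne: "x \<noteq> y"
    define z where "z = (\<lambda>s. x s - y s)"
    have zV: "z \<in> ?V"
    proof -
      have "(\<lambda>s. x s + (\<lambda>s. (-1) * y s) s) \<in> ?V" using specht_add[OF x specht_scale[OF y]] .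
      then show ?thesis unfolding z_def by simp
    qed
    have "f x = f (\<lambda>s. z s + y s)" unfolding z_def by simp
    also have "\<dots> = f z + f y" using f_add[OF zV y] .
    finally have fz: "f z = 0" using fxy by simp
    obtain s0 where s0: "z s0 \<noteq> 0" using ne unfolding z_def by (auto simp: fun_eq_iff)
    have s0T: "s0 \<in> ?Tab" using specht_supp[OF zV] s0 by blast
    obtain F c where F: "finite F" "F \<subseteq> tableaux la r" "z = (\<lambda>s. \<Sum>T\<in>F. c T * polytabloid la r T s)"
      using zV unfolding specht_def by blast
    have "0 < z s0 * z s0" using s0 by (simp add: zero_less_mult_iff; linarith)
    also have "\<dots> \<le> (\<Sum>s\<in>?Tab. z s * z s)"
      by (rule member_le_sum[OF s0T]) (simp_all add: finite_tabloids)
    also have "\<dots> = (\<Sum>s\<in>?Tab. \<Sum>T\<in>F. c T * (z s * polytabloid la r T s))"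
      by (subst (2) F(3)) (simp add: sum_distrib_left mult_ac)
    also have "\<dots> = (\<Sum>T\<in>F. c T * (\<Sum>s\<in>?Tab. z s * polytabloid la r T s))"
      by (subst sum.swap) (simp add: sum_distrib_left)
    finally have "(\<Sum>T\<in>F. c T * (\<Sum>s\<in>?Tab. z s * polytabloid la r T s)) \<noteq> 0" by simp
    then obtain T where TF: "T \<in> F" and a0: "(\<Sum>s\<in>?Tab. z s * polytabloid la r T s) \<noteq> 0"
      using sum.neutral by force
    define a where "a = (\<Sum>s\<in>?Tab. z s * polytabloid la r T s)"
    have Tt: "T \<in> tableaux la r" using TF F(2) by blast
    interpret tabx la r T by unfold_locales (rule tab_bij[OF Tt])
    have kz: "kap z = (\<lambda>s. a * polytabloid la r T s)"
      using kap_formula[OF assms(1) specht_supp[OF zV]] unfolding a_def by auto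
    have "f (kap z) = 0"
    proof -
      have "kap z = (\<lambda>s. \<Sum>\<pi>\<in>C. (\<lambda>s. sign \<pi> * perm_vec \<pi> z s) s)"
        by (simp add: kap_def perm_vec_def)
      moreover have "(\<lambda>s. sign \<pi> * perm_vec \<pi> z s) \<in> ?V" if "\<pi> \<in> C" for \<pi>
        using specht_scale[OF specht_perm[OF C_perm[OF that] zV]] .
      ultimately have "f (kap z) = (\<Sum>\<pi>\<in>C. f (\<lambda>s. sign \<pi> * perm_vec \<pi> z s))"
        using f_sum[OF finite_C] by simp
      also have "\<dots> = (\<Sum>\<pi>\<in>C. zscale (sign \<pi>) (act \<pi> (f z)))"
        using f_scale[OF specht_perm[OF C_perm zV]] f_perm[OF C_perm zV] by (intro sum.cong) auto
      also have "\<dots> = 0" using fz act_zero[OF assms(2) C_perm] by simp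
      finally show ?thesis .
    qed
    then have "zscale a (f (polytabloid la r T)) = 0"
      using kz f_scale[OF specht_poly[OF Tt]] by simp
    then have fT: "f (polytabloid la r T) = 0" using torsion_free[OF assms(3)] a0 unfolding a_def by blast
    have fall: "f (polytabloid la r T') = 0" if T': "T' \<in> tableaux la r" for T'
    proof -
      obtain \<pi> where p: "\<pi> permutes {0..<r}" and e: "polytabloid la r T' = perm_vec \<pi> (polytabloid la r T)"
        using tableaux_conj[OF Tt T'] by blast
      show ?thesis using e f_perm[OF p specht_poly[OF Tt]] fT act_zero[OF assms(2) p] by simp
    qed
    have "f v = 0" if v: "v \<in> ?V" for v
    proof -
      obtain F' c' where F': "finite F'" "F' \<subseteq> tableaux la r" "v = (\<lambda>s. \<Sum>T\<in>F'. (\<lambda>s. c' T * polytabloid la r T s) s)"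
        using v unfolding specht_def by auto
      have "f v = (\<Sum>T\<in>F'. f (\<lambda>s. c' T * polytabloid la r T s))"
        unfolding F'(3) using F' by (intro f_sum) (auto intro!: specht_scale specht_poly)
      also have "\<dots> = 0" using F'(2) f_scale[OF specht_poly] fall by (intro sum.neutral) auto
      finally show ?thesis .
    qed
    then show False using assms(5) by blast
  qed
qed


end
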